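(* Let $\mathcal I,\mathcal J$ be ideals on $\omega$. Then (1) $\mathfrak b_\sigma(\mathcal I,\mathcal J)=\min\{\mathfrak b_s(\mathcal I\cap\mathcal J,\mathcal J,\mathcal I),\mathrm{add}_\omega(\mathcal I,\mathcal J)\}$; (2) $\mathfrak b_\sigma(\mathcal I)=\min\{\mathfrak b_s(\mathcal I),\mathrm{add}_\omega(\mathcal I)\}$.
   Context: An ideal on $\omega$ is a family $\mathcal I\subseteq\mathcal P(\omega)$ closed under finite unions and subsets, containing all finite sets, with $\omega\notin\mathcal I$. Convention: $\min\emptyset=\infty$ and $\kappa<\infty$ for every cardinal $\kappa$. $\widehat{\mathcal P}_{\mathcal I}$ = sequences $(A_n)\in\mathcal I^\omega$ of pairwise disjoint sets; $\mathcal P_{\mathcal I}$ = those with $\bigcup_nA_n=\omega$; $\mathcal M_{\mathcal I}$ = sequences $(E_k)\in\mathcal I^\omega$ with $E_k\subseteq E_{k+1}$ for all $k$. $\mathfrak b_s(\mathcal I,\mathcal J,\mathcal K)=\min\{|\mathcal E|:\mathcal E\subseteq\widehat{\mathcal P}_{\mathcal K}$ and for every $(A_n)\in\mathcal P_{\mathcal J}$ there is $(E_n)\in\mathcal E$ with $\bigcup_n(A_{n+1}\cap\bigcup_{i\le n}E_i)\notin\mathcal I\}$; $\mathfrak b_\sigma(\mathcal I,\mathcal J)=\min\{|\mathcal E|:\mathcal E\subseteq\mathcal M_{\mathcal I}$ and for every $(A_n)\in\mathcal M_{\mathcal J}$ there is $(E_n)\in\mathcal E$ with $E_n\not\subseteq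 A_n$ for infinitely many $n\}$; $\mathrm{add}_\omega(\mathcal I,\mathcal J)=\min\{|\mathcal A|:\mathcal A\subseteq\mathcal I$ and for every $(B_n)\in\mathcal J^\omega$ there is $A\in\mathcal A$ with $A\not\subseteq B_n$ for all $n\}$. $\mathfrak b_s(\mathcal I)=\mathfrak b_s(\mathcal I,\mathcal I,\mathcal I)$, $\mathfrak b_\sigma(\mathcal I)=\mathfrak b_\sigma(\mathcal I,\mathcal I)$, $\mathrm{add}_\omega(\mathcal I)=\mathrm{add}_\omega(\mathcal I,\mathcal I)$. *)

theory Defs
  imports Main
begin

definition is_ideal :: "nat set set \<Rightarrow> bool" where
  "is_ideal I \<longleftrightarrow>
     (\<forall>A\<in>I. \<forall>B\<in>I. A \<union> B \<in> I) \<and>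
     (\<forall>A\<in>I. \<forall>B. B \<subseteq> A \<longrightarrow> B \<in> I) \<and>
     (\<forall>F. finite F \<longrightarrow> F \<in> I) \<and>
     UNIV \<notin> I"

definition Phat :: "nat set set \<Rightarrow> (nat \<Rightarrow> nat set) set" where
  "Phat K = {A. (\<forall>n. A n \<in> K) \<and> (\<forall>m n. m \<noteq> n \<longrightarrow> A m \<inter> A n = {})}"

definition Part :: "nat set set \<Rightarrow> (nat \<Rightarrow> nat set) set" where
  "Part K = {A. A \<in> Phat K \<and> (\<Union>n. A n) = UNIV}"

definition Mon :: "nat set set \<Rightarrow> (nat \<Rightarrow> nat set) set" where
  "Mon I = {E. (\<forall>k. E k \<in> I) \<and> (\<forall>k. E k \<subseteq> E (Suc k))}"

text \<open>Each invariant is the minimum cardinality of a family in the corresponding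
  set of witness families (with min of the empty set = infinity).\<close>

definition bs_fams :: "nat set set \<Rightarrow> nat set set \<Rightarrow> nat set set \<Rightarrow> (nat \<Rightarrow> nat set) set set" where
  "bs_fams I J K = {\<E>. \<E> \<subseteq> Phat K \<and>
     (\<forall>A\<in>Part J. \<exists>E\<in>\<E>. (\<Union>n. A (Suc n) \<inter> (\<Union>i\<le>n. E i)) \<notin> I)}"

definition bsigma_fams :: "nat set set \<Rightarrow> nat set set \<Rightarrow> (nat \<Rightarrow> nat set) set set" where
  "bsigma_fams I J = {\<E>. \<E> \<subseteq> Mon I \<and>
     (\<forall>A\<in>Mon J. \<exists>E\<in>\<E>. infinite {n. \<not> E n \<subseteq> A n})}"

definition addw_fams :: "nat set set \<Rightarrow> nat set set \<Rightarrow> nat set set set" where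
  "addw_fams I J = {\<A>. \<A> \<subseteq> I \<and>
     (\<forall>B::nat \<Rightarrow> nat set. (\<forall>n. B n \<in> J) \<longrightarrow> (\<exists>A\<in>\<A>. \<forall>n. \<not> A \<subseteq> B n))}"

text \<open>mincard X denotes min of the cardinalities of members of X (infinity if X = {}).
  Since cardinals are well-ordered, min|X| <= min|Y| iff every y in Y has some x in X with |x| <= |y|.\<close>

definition mincard_le :: "'a set set \<Rightarrow> 'b set set \<Rightarrow> bool" where
  "mincard_le X Y \<longleftrightarrow> (\<forall>y\<in>Y. \<exists>x\<in>X. (card_of x, card_of y) \<in> ordLeq)"

text \<open>min|X| = min(min|Y|, min|Z|)\<close>
definition mincard_eq_min :: "'a set set \<Rightarrow> 'b set set \<Rightarrow> 'c set set \<Rightarrow> bool" where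
  "mincard_eq_min X Y Z \<longleftrightarrow>
     mincard_le X Y \<and> mincard_le X Z \<and>
     (\<forall>x\<in>X. (\<exists>y\<in>Y. (card_of y, card_of x) \<in> ordLeq) \<or> (\<exists>z\<in>Z. (card_of z, card_of x) \<in> ordLeq))"

end

theory Submission
  imports Defs
begin

lemma ideal_union: "is_ideal I \<Longrightarrow> A \<in> I \<Longrightarrow> B \<in> I \<Longrightarrow> A \<union> B \<in> I"
  unfolding is_ideal_def by blast

lemma ideal_sub: "is_ideal I \<Longrightarrow> A \<in> I \<Longrightarrow> B \<subseteq> A \<Longrightarrow> B \<in> I"
  unfolding is_ideal_def by blast

lemma ideal_fin: "is_ideal I \<Longrightarrow> finite F \<Longrightarrow> F \<in> I"
  unfolding is_ideal_def by blast

lemma ideal_UN: "is_ideal I \<Longrightarrow> (\<And>i. f i \<in> I) \<Longrightarrow> (\<Union>i\<le>(n::nat). f i) \<in> I"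
proof (induction n)
  case 0 then show ?case by simp
next
  case (Suc n)
  have "(\<Union>i\<le>Suc n. f i) = (\<Union>i\<le>n. f i) \<union> f (Suc n)" by (auto simp: atMost_Suc)
  then show ?case using Suc ideal_union by metis
qed

lemma UN_mono_seq: "(\<Union>i\<le>n. f i) \<subseteq> (\<Union>i\<le>Suc n. f i)"
  by (auto simp: atMost_Suc)

definition dseq :: "(nat \<Rightarrow> nat set) \<Rightarrow> nat \<Rightarrow> nat set" where
  "dseq E n = (case n of 0 \<Rightarrow> E 0 | Suc m \<Rightarrow> E (Suc m) - E m)"

lemma dseq_sub: "dseq E n \<subseteq> E n"
  by (cases n) (auto simp: dseq_def)

lemma dseq_UN:
  assumes "\<And>k. E k \<subseteq> E (Suc k)"
  shows "(\<Union>i\<le>n. dseq E i) = E n"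
proof (induction n)
  case 0 then show ?case by (simp add: dseq_def)
next
  case (Suc n)
  have "(\<Union>i\<le>Suc n. dseq E i) = (\<Union>i\<le>n. dseq E i) \<union> dseq E (Suc n)" by (auto simp: atMost_Suc)
  also have "\<dots> = E n \<union> (E (Suc n) - E n)" using Suc by (simp add: dseq_def)
  also have "\<dots> = E (Suc n)" using assms[of n] by blast
  finally show ?case .
qed

lemma dseq_disj:
  assumes "\<And>k. E k \<subseteq> E (Suc k)" and "m \<noteq> n"
  shows "dseq E m \<inter> dseq E n = {}"
proof -
  have mono: "E a \<subseteq> E b" if "a \<le> b" for a b
    using lift_Suc_mono_le[of E, OF assms(1) that] .
  have *: "dseq E a \<inter> dseq E b = {}" if "a < b" for a b
  proof -
    obtain c where b: "b = Suc c" and "a \<le> c" using \<open>a < b\<close> by (cases b) auto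
    then have "dseq E a \<subseteq> E c" using dseq_sub mono by blast
    moreover have "dseq E b \<inter> E c = {}" using b by (auto simp: dseq_def)
    ultimately show ?thesis by blast
  qed
  show ?thesis
    using assms(2) *[of m n] *[of n m] by (cases "m < n") auto
qed

lemma part_a:
  assumes I: "is_ideal I" and J: "is_ideal J"
  shows "mincard_le (bsigma_fams I J) (bs_fams (I \<inter> J) J I)"
  unfolding mincard_le_def
proof
  fix Es assume Es: "Es \<in> bs_fams (I \<inter> J) J I"
  define F where "F = (\<lambda>E::nat \<Rightarrow> nat set. \<lambda>n. \<Union>i\<le>n. E i)"
  have "F ` Es \<in> bsigma_fams I J"
    unfolding bsigma_fams_def
  proof (intro CollectI conjI ballI)
    show "F ` Es \<subseteq> Mon I"
    proof
      fix G assume "G \<in> F ` Es"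
      then obtain E where E: "E \<in> Es" and G: "G = F E" by blast
      have "E i \<in> I" for i using E Es unfolding bs_fams_def Phat_def by blast
      then have "G k \<in> I" for k unfolding G F_def using ideal_UN[OF I] by blast
      moreover have "G k \<subseteq> G (Suc k)" for k unfolding G F_def by (rule UN_mono_seq)
      ultimately show "G \<in> Mon I" unfolding Mon_def by blast
    qed
  next
    fix B assume B: "B \<in> Mon J"
    define B' where "B' = (\<lambda>n. B n \<union> {..n})"
    have B'J: "B' n \<in> J" for n
    proof -
      have "B n \<in> J" using B unfolding Mon_def by blast
      moreover have "{..n} \<in> J" by (rule ideal_fin[OF J]) simp
      ultimately show ?thesis unfolding B'_def by (rule ideal_union[OF J])
    qed
    have B'mono: "B' k \<subseteq> B' (Suc k)" for k
      using B unfolding B'_def Mon_def by auto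
    have B'monole: "B' a \<subseteq> B' b" if "a \<le> b" for a b
      using lift_Suc_mono_le[of B', OF B'mono that] .
    define A where "A = dseq B'"
    have "A \<in> Part J"
    proof -
      have "A n \<in> J" for n unfolding A_def by (rule ideal_sub[OF J B'J dseq_sub])
      moreover have "\<forall>m n. m \<noteq> n \<longrightarrow> A m \<inter> A n = {}"
        using dseq_disj[of B', OF B'mono] unfolding A_def by blast
      moreover have "(\<Union>n. A n) = UNIV"
      proof -
        have "x \<in> (\<Union>n. A n)" for x
        proof -
          have "x \<in> B' x" unfolding B'_def by auto
          then have "x \<in> (\<Union>i\<le>x. A i)" using dseq_UN[of B', OF B'mono] unfolding A_def by simp
          then show ?thesis by blast
        qed
        then show ?thesis by blast
      qed
      ultimately show ?thesis unfolding Part_def Phat_def by blast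
    qed
    then obtain E where E: "E \<in> Es" and S: "(\<Union>n. A (Suc n) \<inter> (\<Union>i\<le>n. E i)) \<notin> I \<inter> J"
      using Es unfolding bs_fams_def by blast
    have EI: "E i \<in> I" for i using E Es unfolding bs_fams_def Phat_def by blast
    have Fmono: "F E a \<subseteq> F E b" if "a \<le> b" for a b
      unfolding F_def using that by (auto simp: subset_eq)
    have "infinite {n. \<not> F E n \<subseteq> B n}"
    proof
      assume fin: "finite {n. \<not> F E n \<subseteq> B n}"
      then obtain N where N: "\<forall>n\<ge>N. F E n \<subseteq> B n"
      proof -
        obtain M where "\<forall>n\<in>{n. \<not> F E n \<subseteq> B n}. n \<le> M"
          using fin finite_nat_set_iff_bounded_le by blast
        then have "\<forall>n\<ge>Suc M. F E n \<subseteq> B n" by fastforce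
        then show ?thesis using that by blast
      qed
      have "(\<Union>n. A (Suc n) \<inter> (\<Union>i\<le>n. E i)) \<subseteq> F E N \<inter> B' N"
      proof
        fix x assume "x \<in> (\<Union>n. A (Suc n) \<inter> (\<Union>i\<le>n. E i))"
        then obtain n where x1: "x \<in> A (Suc n)" and x2: "x \<in> F E n" unfolding F_def by blast
        show "x \<in> F E N \<inter> B' N"
        proof (cases "N \<le> n")
          case True
          then have "x \<in> B' n" using N x2 unfolding B'_def by blast
          moreover have "A (Suc n) \<inter> B' n = {}" unfolding A_def dseq_def by auto
          ultimately show ?thesis using x1 by blast
        next
          case False
          then have "x \<in> B' (Suc n)" using x1 dseq_sub unfolding A_def by blast
          then have "x \<in> B' N" using B'monole[of "Suc n" N] False by auto
          moreover have "x \<in> F E N" using Fmono[of n N] False x2 by auto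
          ultimately show ?thesis by blast
        qed
      qed
      moreover have "F E N \<in> I" unfolding F_def using ideal_UN[OF I] EI by blast
      ultimately have "(\<Union>n. A (Suc n) \<inter> (\<Union>i\<le>n. E i)) \<in> I \<inter> J"
        using ideal_sub[OF I \<open>F E N \<in> I\<close>] ideal_sub[OF J B'J[of N]] by (meson IntI le_inf_iff)
      then show False using S by blast
    qed
    then show "\<exists>G\<in>F ` Es. infinite {n. \<not> G n \<subseteq> B n}" using E by blast
  qed
  then show "\<exists>x\<in>bsigma_fams I J. (card_of x, card_of Es) \<in> ordLeq"
    using card_of_image[of F] by blast
qed


lemma part_b:
  shows "mincard_le (bsigma_fams I J) (addw_fams I J)"
  unfolding mincard_le_def
proof
  fix As assume As: "As \<in> addw_fams I J"
  define F where "F = (\<lambda>A::nat set. \<lambda>n::nat. A)"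
  have "F ` As \<in> bsigma_fams I J"
    unfolding bsigma_fams_def
  proof (intro CollectI conjI ballI)
    show "F ` As \<subseteq> Mon I" using As unfolding addw_fams_def Mon_def F_def by auto
  next
    fix B assume B: "B \<in> Mon J"
    then obtain A where "A \<in> As" "\<forall>n. \<not> A \<subseteq> B n"
      using As unfolding addw_fams_def Mon_def by blast
    then have "A \<in> As" "{n. \<not> F A n \<subseteq> B n} = UNIV" unfolding F_def by auto
    then show "\<exists>G\<in>F ` As. infinite {n. \<not> G n \<subseteq> B n}" using infinite_UNIV_nat by (metis imageI)
  qed
  then show "\<exists>x\<in>bsigma_fams I J. (card_of x, card_of As) \<in> ordLeq"
    using card_of_image[of F] by blast
qed

lemma part_c:
  assumes I: "is_ideal I" and J: "is_ideal J" and X: "X \<in> bsigma_fams I J"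
  shows "(\<exists>y\<in>bs_fams (I \<inter> J) J I. (card_of y, card_of X) \<in> ordLeq) \<or>
         (\<exists>z\<in>addw_fams I J. (card_of z, card_of X) \<in> ordLeq)"
proof (rule ccontr)
  assume neg: "\<not> ?thesis"
  have neg1: "\<forall>y\<in>bs_fams (I \<inter> J) J I. (card_of y, card_of X) \<notin> ordLeq"
    using neg by simp
  have neg2: "\<forall>z\<in>addw_fams I J. (card_of z, card_of X) \<notin> ordLeq"
    using neg by simp
  have XM: "\<And>E. E \<in> X \<Longrightarrow> E \<in> Mon I" using X unfolding bsigma_fams_def by blast
  have "dseq ` X \<subseteq> Phat I"
  proof
    fix D assume "D \<in> dseq ` X"
    then obtain E where E: "E \<in> X" and D: "D = dseq E" by blast
    have EI: "E k \<in> I" and "E k \<subseteq> E (Suc k)" for k using XM[OF E] unfolding Mon_def by auto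
    have "dseq E n \<in> I" for n by (rule ideal_sub[OF I EI dseq_sub])
    moreover have "\<forall>m n. m \<noteq> n \<longrightarrow> dseq E m \<inter> dseq E n = {}"
      using dseq_disj[of E] \<open>\<And>k. E k \<subseteq> E (Suc k)\<close> by blast
    ultimately show "D \<in> Phat I" unfolding Phat_def D by blast
  qed
  moreover have "dseq ` X \<notin> bs_fams (I \<inter> J) J I"
  proof
    assume "dseq ` X \<in> bs_fams (I \<inter> J) J I"
    then have "(card_of (dseq ` X), card_of X) \<notin> ordLeq" by (rule bspec[OF neg1])
    moreover have "(card_of (dseq ` X), card_of X) \<in> ordLeq" by (rule card_of_image)
    ultimately show False by (rule notE)
  qed
  ultimately obtain A where A: "A \<in> Part J" and
    AS: "\<forall>D\<in>dseq ` X. (\<Union>n. A (Suc n) \<inter> (\<Union>i\<le>n. D i)) \<in> I \<inter> J"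
    unfolding bs_fams_def by blast
  define S where "S = (\<lambda>E::nat\<Rightarrow>nat set. \<Union>n. A (Suc n) \<inter> E n)"
  have SE: "S E \<in> I \<inter> J" if "E \<in> X" for E
  proof -
    have "\<And>k. E k \<subseteq> E (Suc k)" using XM[OF that] unfolding Mon_def by auto
    then have "(\<Union>n. A (Suc n) \<inter> (\<Union>i\<le>n. dseq E i)) = S E"
      unfolding S_def using dseq_UN[of E] by simp
    then show ?thesis using AS that by auto
  qed
  define B where "B = (\<lambda>n. \<Union>i\<le>n. A i)"
  have AJ: "A i \<in> J" for i using A unfolding Part_def Phat_def by blast
  have cover: "E n \<subseteq> B n \<union> S E" if "E \<in> X" for E n
  proof
    fix x assume x: "x \<in> E n"
    have Em: "\<And>k. E k \<subseteq> E (Suc k)" using XM[OF \<open>E \<in> X\<close>] unfolding Mon_def by blast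
    have mono: "E a \<subseteq> E b" if "a \<le> b" for a b
      by (rule lift_Suc_mono_le[of E, OF Em that])
    obtain k where k: "x \<in> A k" using A unfolding Part_def by blast
    show "x \<in> B n \<union> S E"
    proof (cases "k \<le> n")
      case True then show ?thesis using k unfolding B_def by blast
    next
      case False
      then obtain j where j: "k = Suc j" "n \<le> j" by (cases k) auto
      then have "x \<in> E j" using mono[OF j(2)] x by blast
      then show ?thesis using k j unfolding S_def by blast
    qed
  qed
  have "S ` X \<subseteq> I" using SE by blast
  moreover have "S ` X \<notin> addw_fams I J"
  proof
    assume "S ` X \<in> addw_fams I J"
    then have "(card_of (S ` X), card_of X) \<notin> ordLeq" by (rule bspec[OF neg2])
    moreover have "(card_of (S ` X), card_of X) \<in> ordLeq" by (rule card_of_image)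
    ultimately show False by (rule notE)
  qed
  ultimately have "\<not> (\<forall>B::nat\<Rightarrow>nat set. (\<forall>n. B n \<in> J) \<longrightarrow> (\<exists>A\<in>S ` X. \<forall>n. \<not> A \<subseteq> B n))"
    unfolding addw_fams_def by simp
  then obtain C :: "nat \<Rightarrow> nat set" where C: "\<forall>n. C n \<in> J"
    and C2: "\<not> (\<exists>A\<in>S ` X. \<forall>n. \<not> A \<subseteq> C n)" by blast
  from C2 have CS: "\<forall>T\<in>S ` X. \<exists>n. T \<subseteq> C n" by blast
  define B' where "B' = (\<lambda>n. B n \<union> (\<Union>i\<le>n. C i))"
  have "B' k \<in> J" for k
    unfolding B'_def B_def
  proof (rule ideal_union[OF J])
    show "(\<Union>i\<le>k. A i) \<in> J" by (rule ideal_UN[OF J AJ])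
    show "(\<Union>i\<le>k. C i) \<in> J" using C by (intro ideal_UN[OF J]) blast
  qed
  moreover have "B' k \<subseteq> B' (Suc k)" for k
    unfolding B'_def B_def by (auto simp: atMost_Suc)
  ultimately have "B' \<in> Mon J" unfolding Mon_def by blast
  then obtain E where E: "E \<in> X" and inf: "infinite {n. \<not> E n \<subseteq> B' n}"
    using X unfolding bsigma_fams_def by blast
  obtain m where m: "S E \<subseteq> C m" using CS E by blast
  have "{n. \<not> E n \<subseteq> B' n} \<subseteq> {..<m}"
  proof
    fix n assume n: "n \<in> {n. \<not> E n \<subseteq> B' n}"
    show "n \<in> {..<m}"
    proof (rule ccontr)
      assume "n \<notin> {..<m}"
      then have "m \<le> n" by simp
      then have "C m \<subseteq> (\<Union>i\<le>n. C i)" by blast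
      then have "C m \<subseteq> B' n" unfolding B'_def by blast
      then have "E n \<subseteq> B' n" using cover[OF E, of n] m unfolding B'_def by blast
      then show False using n by blast
    qed
  qed
  then have "finite {n. \<not> E n \<subseteq> B' n}" by (rule finite_subset) simp
  then show False using inf by blast
qed

lemma main1:
  assumes "is_ideal I" and "is_ideal J"
  shows "mincard_eq_min (bsigma_fams I J) (bs_fams (I \<inter> J) J I) (addw_fams I J)"
  unfolding mincard_eq_min_def
  using part_a[OF assms] part_b part_c[OF assms] by blast

theorem theorem5p2:
  assumes "is_ideal I" and "is_ideal J"
  shows "mincard_eq_min (bsigma_fams I J) (bs_fams (I \<inter> J) J I) (addw_fams I J) \<and>
         mincard_eq_min (bsigma_fams I I) (bs_fams I I I) (addw_fams I I)"
  using main1[OF assms] main1[OF assms(1) assms(1)] by simp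

end
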